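(* Let $n\ge3$, $a>0$, $\sigma>1/2$. Let $V_0(x)=V_0(|x|)$ be a radially symmetric, radially decreasing, real-valued $C^1$ function on $\mathbb{R}^n$, and let $c=(c_1,\vec 0)\in\mathbb{R}^n$ with $\vec0\in\mathbb{R}^{n-1}$. Writing $x=(x_1,\vec y)\in\mathbb{R}\times\mathbb{R}^{n-1}$, we have, pointwise for $x\ne0$, $$ i[V_0(x),\gamma_{-c}+\gamma_c]\ \ge\ -2V_0'(|x|)\,\min\{f(|x+c|),f(|x-c|)\}\,\frac{2|\vec y|^2}{|x|}\,\frac{1}{|x|+|c|}\ \ge\ 0. $$
   Context: Notation: $g(r)=(1+ar^2)^{-\sigma/2}$; $f(r)=\int_0^r g^2(s)\,ds$; $F(x)=\int_0^{|x|}f(t)\,dt$; for $c\in\mathbb{R}^n$, $F_c(x)=F(x-c)$ and $\gamma_c=i[-\Delta,F_c]=-i(\nabla\cdot\nabla F_c+\nabla F_c\cdot\nabla)$. For a potential $V$, the commutator $i[V,\gamma_c]$ is the multiplication operator by the function $-2\nabla F_c\cdot\nabla V$. $V_0'$ denotes the radial derivative. *)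

theory Defs
  imports "HOL-Analysis.Analysis"
begin

definition gfun :: "real \<Rightarrow> real \<Rightarrow> real \<Rightarrow> real" where
  "gfun a \<sigma> r = (1 + a * r\<^sup>2) powr (- \<sigma> / 2)"

definition ffun :: "real \<Rightarrow> real \<Rightarrow> real \<Rightarrow> real" where
  "ffun a \<sigma> r = integral {0..r} (\<lambda>s. (gfun a \<sigma> s)\<^sup>2)"

definition Ffun :: "real \<Rightarrow> real \<Rightarrow> 'a::real_normed_vector \<Rightarrow> real" where
  "Ffun a \<sigma> x = integral {0..norm x} (ffun a \<sigma>)"

definition Fc :: "real \<Rightarrow> real \<Rightarrow> 'a::real_normed_vector \<Rightarrow> 'a \<Rightarrow> real" where
  "Fc a \<sigma> c x = Ffun a \<sigma> (x - c)"

definition grad :: "('a::euclidean_space \<Rightarrow> real) \<Rightarrow> 'a \<Rightarrow> 'a" where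
  "grad h x = (\<Sum>i\<in>Basis. frechet_derivative h (at x) i *\<^sub>R i)"

text \<open>The function by which the commutator i[V, gamma_c] acts: -2 grad F_c . grad V.\<close>
definition comm_fun :: "real \<Rightarrow> real \<Rightarrow> ('a::euclidean_space \<Rightarrow> real) \<Rightarrow> 'a \<Rightarrow> 'a \<Rightarrow> real" where
  "comm_fun a \<sigma> V c x = - 2 * (grad (Fc a \<sigma> c) x \<bullet> grad V x)"

end

theory Submission
  imports Defs
begin

lemma g2_bounds:
  assumes "a > 0" "\<sigma> > 0"
  shows "0 \<le> (gfun a \<sigma> s)\<^sup>2" "(gfun a \<sigma> s)\<^sup>2 \<le> 1"
proof -
  have b: "1 \<le> 1 + a * s\<^sup>2" using assms by simp
  have "(gfun a \<sigma> s)\<^sup>2 = (1 + a * s\<^sup>2) powr (- \<sigma>)"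
    unfolding gfun_def using b by (simp add: powr_powr[symmetric] power2_eq_square powr_add[symmetric])
  also have "\<dots> \<le> 1"
  proof -
    have "1 \<le> (1 + a * s\<^sup>2) powr \<sigma>" using b assms by (simp add: ge_one_powr_ge_zero)
    then show ?thesis by (simp add: powr_minus_divide divide_le_eq_1)
  qed
  finally show "(gfun a \<sigma> s)\<^sup>2 \<le> 1" .
qed simp

lemma g2_cont:
  assumes "a > 0"
  shows "continuous_on S (\<lambda>s. (gfun a \<sigma> s)\<^sup>2)"
proof -
  have "\<And>s. 0 < 1 + a * s\<^sup>2" using assms by (simp add: add_pos_nonneg)
  then show ?thesis unfolding gfun_def by (intro continuous_intros) (auto, metis less_irrefl)
qed

lemma g2_int: "a > 0 \<Longrightarrow> (\<lambda>s. (gfun a \<sigma> s)\<^sup>2) integrable_on {u..v}"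
  by (rule integrable_continuous_interval) (rule g2_cont)

lemma ffun_nonneg: "a > 0 \<Longrightarrow> \<sigma> > 0 \<Longrightarrow> 0 \<le> ffun a \<sigma> r"
  unfolding ffun_def by (rule integral_nonneg[OF g2_int]) (auto intro: g2_bounds)

lemma ffun_le: "a > 0 \<Longrightarrow> \<sigma> > 0 \<Longrightarrow> 0 \<le> r \<Longrightarrow> ffun a \<sigma> r \<le> r"
proof -
  assume h: "a > 0" "\<sigma> > 0" "0 \<le> r"
  have "ffun a \<sigma> r \<le> integral {0..r} (\<lambda>s. 1::real)"
    unfolding ffun_def by (rule integral_le[OF g2_int]) (use h g2_bounds in auto)
  then show ?thesis using h by simp
qed

lemma ffun_mono: "a > 0 \<Longrightarrow> \<sigma> > 0 \<Longrightarrow> 0 \<le> r \<Longrightarrow> r \<le> s \<Longrightarrow> ffun a \<sigma> r \<le> ffun a \<sigma> s"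
  unfolding ffun_def
  by (rule integral_subset_le) (auto intro: g2_int g2_bounds)

lemma ffun_0: "ffun a \<sigma> 0 = 0"
  unfolding ffun_def by simp

lemma ffun_cont: "a > 0 \<Longrightarrow> continuous_on {0..v} (ffun a \<sigma>)"
  unfolding ffun_def[abs_def] by (rule indefinite_integral_continuous_1[OF g2_int])


definition Gf :: "real \<Rightarrow> real \<Rightarrow> real \<Rightarrow> real" where
  "Gf a \<sigma> r = integral {0..r} (ffun a \<sigma>)"

lemma Ffun_G: "Ffun a \<sigma> x = Gf a \<sigma> (norm x)"
  unfolding Ffun_def Gf_def by simp

lemma G_deriv:
  assumes "a > 0" "r > 0"
  shows "(Gf a \<sigma> has_real_derivative ffun a \<sigma> r) (at r)"
proof -
  have "(Gf a \<sigma> has_vector_derivative ffun a \<sigma> r) (at r within {0..r+1})"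
    unfolding Gf_def[abs_def]
    by (rule integral_has_vector_derivative[OF ffun_cont[OF assms(1)]]) (use assms in auto)
  moreover have "at r within {0..r+1} = at r"
    by (rule at_within_interior) (use assms in auto)
  ultimately show ?thesis by (simp add: has_real_derivative_iff_has_vector_derivative)
qed

lemma G_bound:
  assumes "a > 0" "\<sigma> > 0" "r \<ge> 0"
  shows "\<bar>Gf a \<sigma> r\<bar> \<le> r * r"
proof -
  have int: "ffun a \<sigma> integrable_on {0..r}"
    by (rule integrable_continuous_interval[OF ffun_cont[OF assms(1)]])
  have "0 \<le> Gf a \<sigma> r" unfolding Gf_def
    by (rule integral_nonneg[OF int]) (use assms ffun_nonneg in auto)
  moreover have "Gf a \<sigma> r \<le> integral {0..r} (\<lambda>t. r)" unfolding Gf_def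
    by (rule integral_le[OF int]) (use assms in \<open>auto intro: order_trans[OF ffun_le]\<close>)
  ultimately show ?thesis using assms by simp
qed

lemma Ffun_deriv0:
  fixes a \<sigma> :: real
  assumes "a > 0" "\<sigma> > 0"
  shows "(Ffun a \<sigma> has_derivative (\<lambda>h::'a::real_normed_vector. 0)) (at 0)"
proof -
  have F0: "Ffun a \<sigma> (0::'a) = 0" unfolding Ffun_def by simp
  have key: "norm (Ffun a \<sigma> y) \<le> e * norm y" if "norm y < e" for y :: 'a and e
  proof -
    have "\<bar>Ffun a \<sigma> y\<bar> \<le> norm y * norm y" unfolding Ffun_G by (rule G_bound) (use assms in auto)
    moreover have "norm y * norm y \<le> e * norm y" using that by (simp add: mult_right_mono)
    ultimately show ?thesis by simp
  qed
  show ?thesis unfolding has_derivative_within_alt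
    using key F0 by (auto intro!: exI[of _ "_ :: real"])
qed

lemma Ffun_deriv:
  fixes a \<sigma> :: real and w :: "'a::real_inner"
  assumes "a > 0" "w \<noteq> 0"
  shows "(Ffun a \<sigma> has_derivative (\<lambda>h. ((ffun a \<sigma> (norm w) / norm w) *\<^sub>R w) \<bullet> h)) (at w)"
proof -
  have "((\<lambda>x. Gf a \<sigma> (norm x)) has_derivative (\<lambda>h. ffun a \<sigma> (norm w) * (h \<bullet> sgn w))) (at w)"
    using has_derivative_compose[OF has_derivative_norm[OF assms(2)]
        has_field_derivative_imp_has_derivative[OF G_deriv[OF assms(1)]]] assms
    by (simp add: o_def)
  then show ?thesis unfolding Ffun_G[abs_def]
    by (rule has_derivative_eq_rhs) (auto simp: sgn_div_norm inner_commute divide_inverse mult.commute)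
qed


lemma grad_eq:
  assumes "(h has_derivative (\<lambda>v. p \<bullet> v)) (at x)"
  shows "grad h x = p"
proof -
  have "frechet_derivative h (at x) = (\<lambda>v. p \<bullet> v)" using frechet_derivative_at[OF assms] by simp
  moreover have "(\<Sum>i\<in>Basis. (p \<bullet> i) *\<^sub>R i) = p" by (rule euclidean_representation)
  ultimately show ?thesis unfolding grad_def by simp
qed

lemma grad_Fc:
  fixes x c :: "'a::euclidean_space"
  assumes "a > 0" "\<sigma> > 0"
  shows "grad (Fc a \<sigma> c) x = (ffun a \<sigma> (norm (x - c)) / norm (x - c)) *\<^sub>R (x - c)"
proof (cases "x = c")
  case True
  have d: "((\<lambda>w. w - c) has_derivative (\<lambda>h. h)) (at x)"
    by (auto intro!: derivative_eq_intros)
  have "(Fc a \<sigma> c has_derivative (\<lambda>v. 0 \<bullet> v)) (at x)"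
    using has_derivative_compose[OF d, of "Ffun a \<sigma>" "\<lambda>h. 0"] Ffun_deriv0[OF assms] True
    unfolding Fc_def[abs_def] by (simp add: o_def)
  then show ?thesis using True by (simp add: grad_eq)
next
  case False
  then have ne: "x - c \<noteq> 0" by simp
  have d: "((\<lambda>w. w - c) has_derivative (\<lambda>h. h)) (at x)"
    by (auto intro!: derivative_eq_intros)
  have "(Fc a \<sigma> c has_derivative (\<lambda>v. ((ffun a \<sigma> (norm (x - c)) / norm (x - c)) *\<^sub>R (x - c)) \<bullet> v)) (at x)"
    using has_derivative_compose[OF d Ffun_deriv[OF assms(1) ne]]
    unfolding Fc_def[abs_def] by (simp add: o_def)
  then show ?thesis by (rule grad_eq)
qed

lemma V0_deriv:
  fixes x :: "'a::euclidean_space"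
  assumes Vd: "(\<lambda>w::'a. V0 (norm w)) differentiable (at x)" and x: "x \<noteq> 0"
  shows "(V0 has_real_derivative deriv V0 (norm x)) (at (norm x))"
proof -
  let ?u = "sgn x"
  have "((\<lambda>w::'a. V0 (norm w)) \<circ> (\<lambda>r::real. r *\<^sub>R ?u)) differentiable (at (norm x))"
    by (rule differentiable_chain_at) (use Vd x in \<open>auto simp: sgn_div_norm\<close>)
  then obtain D where D: "(((\<lambda>w::'a. V0 (norm w)) \<circ> (\<lambda>r::real. r *\<^sub>R ?u)) has_derivative D) (at (norm x))"
    unfolding differentiable_def by blast
  have "(V0 has_derivative D) (at (norm x))"
    by (rule has_derivative_transform_within_open[OF D, of "{0<..}"]) (use x in \<open>auto simp: norm_sgn\<close>)
  then have "V0 differentiable (at (norm x))" unfolding differentiable_def by blast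
  then show ?thesis by (simp add: DERIV_deriv_iff_real_differentiable)
qed

lemma grad_V:
  fixes x :: "'a::euclidean_space"
  assumes Vd: "(\<lambda>w::'a. V0 (norm w)) differentiable (at x)" and x: "x \<noteq> 0"
  shows "grad (\<lambda>w::'a. V0 (norm w)) x = (deriv V0 (norm x) / norm x) *\<^sub>R x"
proof -
  have "((\<lambda>w::'a. V0 (norm w)) has_derivative (\<lambda>h. deriv V0 (norm x) * (h \<bullet> sgn x))) (at x)"
    using has_derivative_compose[OF has_derivative_norm[OF x]
        has_field_derivative_imp_has_derivative[OF V0_deriv[OF assms]]]
    by (simp add: o_def)
  then have "((\<lambda>w::'a. V0 (norm w)) has_derivative (\<lambda>h. ((deriv V0 (norm x) / norm x) *\<^sub>R x) \<bullet> h)) (at x)"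
    by (rule has_derivative_eq_rhs) (auto simp: sgn_div_norm inner_commute divide_inverse mult.commute)
  then show ?thesis by (rule grad_eq)
qed

lemma deriv_nonpos:
  fixes V0 :: "real \<Rightarrow> real"
  assumes "(V0 has_real_derivative l) (at r)" "r \<ge> 0"
    and dec: "\<forall>r s. 0 \<le> r \<longrightarrow> r \<le> s \<longrightarrow> V0 s \<le> V0 r"
  shows "l \<le> 0"
proof (rule ccontr)
  assume "\<not> l \<le> 0"
  then obtain d where "d > 0" "\<forall>h>0. h < d \<longrightarrow> V0 r < V0 (r + h)"
    using DERIV_pos_inc_right[OF assms(1)] by force
  then have "V0 r < V0 (r + d/2)" by simp
  moreover have "V0 (r + d/2) \<le> V0 r" using dec assms(2) \<open>d>0\<close> by simp
  ultimately show False by simp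
qed

lemma hmono_pos:
  fixes s t Y :: real
  assumes "0 \<le> s" "s \<le> t" "0 \<le> Y"
  shows "s / sqrt (s\<^sup>2 + Y) \<le> t / sqrt (t\<^sup>2 + Y)"
proof (cases "s = 0")
  case True then show ?thesis using assms by simp
next
  case False
  then have sp: "s > 0" using assms by simp
  have A: "sqrt (s\<^sup>2 + Y) > 0" using sp assms by (simp add: add_pos_nonneg)
  have B: "sqrt (t\<^sup>2 + Y) > 0" using sp assms by (simp add: add_pos_nonneg)
  have "(s * sqrt (t\<^sup>2 + Y))\<^sup>2 \<le> (t * sqrt (s\<^sup>2 + Y))\<^sup>2"
  proof -
    have "s\<^sup>2 \<le> t\<^sup>2" using assms by (simp add: power_mono)
    then have "s\<^sup>2 * (t\<^sup>2 + Y) \<le> t\<^sup>2 * (s\<^sup>2 + Y)" using assms by (simp add: algebra_simps mult_left_mono)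
    then show ?thesis using assms by (simp add: power_mult_distrib add_nonneg_nonneg)
  qed
  then have "s * sqrt (t\<^sup>2 + Y) \<le> t * sqrt (s\<^sup>2 + Y)"
    using assms sp by (meson A less_le_trans mult_nonneg_nonneg order.strict_implies_order power2_le_imp_le real_sqrt_ge_zero)
  then show ?thesis using A B by (simp add: divide_simps mult.commute)
qed

lemma hmono:
  fixes s t Y :: real
  assumes "s \<le> t" "0 \<le> Y"
  shows "s / sqrt (s\<^sup>2 + Y) \<le> t / sqrt (t\<^sup>2 + Y)"
proof -
  consider "0 \<le> s" | "t \<le> 0" | "s < 0" "0 < t" by linarith
  then show ?thesis
  proof cases
    case 1 then show ?thesis using hmono_pos assms by blast
  next
    case 2
    have "(-t) / sqrt ((-t)\<^sup>2 + Y) \<le> (-s) / sqrt ((-s)\<^sup>2 + Y)"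
      using hmono_pos[of "-t" "-s" Y] 2 assms by simp
    then show ?thesis by simp
  next
    case 3
    have "s / sqrt (s\<^sup>2 + Y) \<le> 0" using 3 assms by (intro divide_nonpos_nonneg) auto
    moreover have "0 \<le> t / sqrt (t\<^sup>2 + Y)" using 3 assms by simp
    ultimately show ?thesis by linarith
  qed
qed


lemma Yterm:
  fixes Y D N f m :: real
  assumes "0 \<le> Y" "N > 0" "D = sqrt (z\<^sup>2 + Y)" "D \<le> N" "0 \<le> m" "m \<le> f" "D = 0 \<Longrightarrow> f = 0"
  shows "m * Y / N \<le> f / D * Y"
proof (cases "D = 0")
  case True
  then have "Y = 0" using assms by (simp add: add_nonneg_eq_0_iff)
  then show ?thesis by simp
next
  case False
  have "z\<^sup>2 + Y \<ge> 0" using assms by simp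
  moreover have "z\<^sup>2 + Y \<noteq> 0" using False assms(3) by auto
  ultimately have "z\<^sup>2 + Y > 0" by linarith
  then have Dp: "D > 0" using assms by simp
  have "m / N \<le> f / D" using assms Dp by (intro frac_le) auto
  then have "m / N * Y \<le> f / D * Y" using assms by (intro mult_right_mono) auto
  then show ?thesis by simp
qed

lemma core:
  fixes x1 c1 Y n Dm Dp fm fp :: real
  assumes Y: "0 \<le> Y" and n: "n > 0"
    and Dm: "Dm = sqrt ((x1 - c1)\<^sup>2 + Y)" "Dm \<le> n + \<bar>c1\<bar>"
    and Dp: "Dp = sqrt ((x1 + c1)\<^sup>2 + Y)" "Dp \<le> n + \<bar>c1\<bar>"
    and f: "0 \<le> fm" "0 \<le> fp" "x1 * c1 \<ge> 0 \<Longrightarrow> fm \<le> fp" "x1 * c1 \<le> 0 \<Longrightarrow> fp \<le> fm"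
      "Dm = 0 \<Longrightarrow> fm = 0" "Dp = 0 \<Longrightarrow> fp = 0"
  shows "min fp fm * (2 * Y) / (n + \<bar>c1\<bar>) \<le> fp / Dp * (x1 * (x1 + c1) + Y) + fm / Dm * (x1 * (x1 - c1) + Y)"
proof -
  define m where "m = min fp fm"
  define N where "N = n + \<bar>c1\<bar>"
  have N: "N > 0" using n by (simp add: N_def add_pos_nonneg)
  have m0: "0 \<le> m" using f by (simp add: m_def)
  have A1: "m * Y / N \<le> fm / Dm * Y"
    by (rule Yterm[OF Y N Dm(1)]) (use Dm f m0 in \<open>auto simp: m_def N_def\<close>)
  have A2: "m * Y / N \<le> fp / Dp * Y"
    by (rule Yterm[OF Y N Dp(1)]) (use Dp f m0 in \<open>auto simp: m_def N_def\<close>)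
  define P where "P = x1 * (x1 + c1) / Dp"
  define Q where "Q = x1 * (x1 - c1) / Dm"
  define hp where "hp = (x1 + c1) / sqrt ((x1 + c1)\<^sup>2 + Y)"
  define hm where "hm = (c1 - x1) / sqrt ((c1 - x1)\<^sup>2 + Y)"
  have Pe: "P = x1 * hp" unfolding P_def hp_def Dp by simp
  have sq: "(x1 - c1)\<^sup>2 = (c1 - x1)\<^sup>2" by (simp add: power2_commute)
  have Qe: "Q = - (x1 * hm)" unfolding Q_def hm_def Dm sq by (simp add: diff_divide_distrib algebra_simps)
  have PQ: "P + Q \<ge> 0"
  proof (cases "x1 \<ge> 0")
    case True
    then have "hm \<le> hp" unfolding hm_def hp_def by (intro hmono) (use Y in auto)
    then have "x1 * hm \<le> x1 * hp" using True by (simp add: mult_left_mono)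
    then show ?thesis by (simp add: Pe Qe)
  next
    case False
    then have "hp \<le> hm" unfolding hm_def hp_def by (intro hmono) (use Y in auto)
    then have "x1 * hm \<le> x1 * hp" using False by (simp add: mult_left_mono_neg)
    then show ?thesis by (simp add: Pe Qe)
  qed
  have B: "fp * P + fm * Q \<ge> 0"
  proof (cases "x1 * c1 \<ge> 0")
    case True
    have "x1 * (x1 + c1) \<ge> 0" using True by (simp add: algebra_simps)
    then have "P \<ge> 0" unfolding P_def using Dp Y by (intro divide_nonneg_nonneg) auto
    then have "fm * P \<le> fp * P" using f True by (simp add: mult_right_mono)
    moreover have "fm * (P + Q) \<ge> 0" using PQ f by simp
    ultimately show ?thesis by (simp add: algebra_simps)
  next
    case False
    have e: "x1 * (x1 - c1) = x1 * x1 - x1 * c1" by (simp add: algebra_simps)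
    have "x1 * x1 \<ge> 0" by simp
    then have "x1 * (x1 - c1) \<ge> 0" using False e by linarith
    then have "Q \<ge> 0" unfolding Q_def using Dm Y by (intro divide_nonneg_nonneg) auto
    then have "fp * Q \<le> fm * Q" using f False by (simp add: mult_right_mono)
    moreover have "fp * (P + Q) \<ge> 0" using PQ f by simp
    ultimately show ?thesis by (simp add: algebra_simps)
  qed
  have "fp / Dp * (x1 * (x1 + c1) + Y) + fm / Dm * (x1 * (x1 - c1) + Y)
      = (fp * P + fm * Q) + (fp / Dp * Y + fm / Dm * Y)"
    unfolding P_def Q_def by (simp add: algebra_simps add_divide_distrib diff_divide_distrib)
  moreover have "m * (2 * Y) / N = m * Y / N + m * Y / N" by simp
  ultimately have "m * (2 * Y) / N \<le> fp / Dp * (x1 * (x1 + c1) + Y) + fm / Dm * (x1 * (x1 - c1) + Y)"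
    using A1 A2 B by argo
  then show ?thesis by (simp add: m_def N_def)
qed

theorem lemma2p2:
  fixes a \<sigma> c1 :: real and V0 :: "real \<Rightarrow> real" and i0 :: "'n::finite" and x :: "real ^ 'n"
  assumes n3: "CARD('n) \<ge> 3"
    and a_pos: "a > 0" and sigma: "\<sigma> > 1 / 2"
    and V_diff: "\<forall>z::real^'n. (\<lambda>w. V0 (norm w)) differentiable (at z)"
    and V_C1: "continuous_on UNIV (grad (\<lambda>w::real^'n. V0 (norm w)))"
    and V0_decr: "\<forall>r s. 0 \<le> r \<longrightarrow> r \<le> s \<longrightarrow> V0 s \<le> V0 r"
    and x_ne: "x \<noteq> 0"
  shows
    "let c = c1 *\<^sub>R axis i0 1;
         V = (\<lambda>w::real^'n. V0 (norm w));
         y2 = (norm x)\<^sup>2 - (x $ i0)\<^sup>2;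
         M = - 2 * deriv V0 (norm x)
               * min (ffun a \<sigma> (norm (x + c))) (ffun a \<sigma> (norm (x - c)))
               * (2 * y2 / norm x) * (1 / (norm x + norm c))
     in comm_fun a \<sigma> V (- c) x + comm_fun a \<sigma> V c x \<ge> M \<and> M \<ge> 0"
proof -
  define c where "c = c1 *\<^sub>R axis i0 (1::real)"
  define V where "V = (\<lambda>w::real^'n. V0 (norm w))"
  define n where "n = norm x"
  define x1 where "x1 = x $ i0"
  define Y where "Y = (norm x)\<^sup>2 - (x $ i0)\<^sup>2"
  define d where "d = deriv V0 (norm x)"
  define fp where "fp = ffun a \<sigma> (norm (x + c))"
  define fm where "fm = ffun a \<sigma> (norm (x - c))"
  define Dp where "Dp = norm (x + c)"
  define Dm where "Dm = norm (x - c)"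
  have s0: "\<sigma> > 0" using sigma by simp
  have n0: "n > 0" using x_ne by (simp add: n_def)
  have nc: "norm c = \<bar>c1\<bar>" by (simp add: c_def)
  have cx: "c \<bullet> x = c1 * x1" by (simp add: c_def x1_def inner_commute inner_axis)
  have Y0: "0 \<le> Y"
  proof -
    have "\<bar>x $ i0\<bar> \<le> norm x" by (rule component_le_norm_cart)
    then have "(x $ i0)\<^sup>2 \<le> (norm x)\<^sup>2" by (metis abs_ge_zero power2_abs power_mono)
    then show ?thesis by (simp add: Y_def)
  qed
  have nsq: "n\<^sup>2 = x1\<^sup>2 + Y" by (simp add: Y_def n_def x1_def)
  have xx: "x \<bullet> x = n\<^sup>2" by (simp add: n_def power2_norm_eq_inner)
  have cc: "c \<bullet> c = c1\<^sup>2" using nc by (metis power2_abs power2_norm_eq_inner)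
  have ipx: "(x + c) \<bullet> x = x1 * (x1 + c1) + Y"
    using xx cx nsq by (simp add: inner_add_left inner_commute algebra_simps power2_eq_square)
  have imx: "(x - c) \<bullet> x = x1 * (x1 - c1) + Y"
    using xx cx nsq by (simp add: inner_diff_left inner_commute algebra_simps power2_eq_square)
  have Dp_eq: "Dp = sqrt ((x1 + c1)\<^sup>2 + Y)"
  proof -
    have "(x + c) \<bullet> (x + c) = (x1 + c1)\<^sup>2 + Y"
      using xx cx nsq cc by (simp add: inner_add_left inner_add_right inner_commute algebra_simps power2_eq_square)
    then show ?thesis by (simp add: Dp_def norm_eq_sqrt_inner)
  qed
  have Dm_eq: "Dm = sqrt ((x1 - c1)\<^sup>2 + Y)"
  proof -
    have "(x - c) \<bullet> (x - c) = (x1 - c1)\<^sup>2 + Y"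
      using xx cx nsq cc by (simp add: inner_diff_left inner_diff_right inner_commute algebra_simps power2_eq_square)
    then show ?thesis by (simp add: Dm_def norm_eq_sqrt_inner)
  qed
  have Dp_le: "Dp \<le> n + \<bar>c1\<bar>" using norm_triangle_ineq[of x c] nc by (simp add: Dp_def n_def)
  have Dm_le: "Dm \<le> n + \<bar>c1\<bar>" using norm_triangle_ineq4[of x c] nc by (simp add: Dm_def n_def)
  have fm0: "0 \<le> fm" unfolding fm_def by (rule ffun_nonneg[OF a_pos s0])
  have fp0: "0 \<le> fp" unfolding fp_def by (rule ffun_nonneg[OF a_pos s0])
  have mono1: "fm \<le> fp" if "x1 * c1 \<ge> 0"
  proof -
    have "(x1 - c1)\<^sup>2 + Y \<le> (x1 + c1)\<^sup>2 + Y" using that by (simp add: power2_eq_square algebra_simps)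
    then have "Dm \<le> Dp" unfolding Dm_eq Dp_eq by simp
    then show ?thesis unfolding fm_def fp_def using ffun_mono[OF a_pos s0] by (simp add: Dm_def Dp_def)
  qed
  have mono2: "fp \<le> fm" if "x1 * c1 \<le> 0"
  proof -
    have "(x1 + c1)\<^sup>2 + Y \<le> (x1 - c1)\<^sup>2 + Y" using that by (simp add: power2_eq_square algebra_simps)
    then have "Dp \<le> Dm" unfolding Dm_eq Dp_eq by simp
    then show ?thesis unfolding fm_def fp_def using ffun_mono[OF a_pos s0] by (simp add: Dm_def Dp_def)
  qed
  have z1: "fm = 0" if "Dm = 0" using that by (simp add: fm_def Dm_def ffun_0)
  have z2: "fp = 0" if "Dp = 0" using that by (simp add: fp_def Dp_def ffun_0)
  have core_ineq: "min fp fm * (2 * Y) / (n + \<bar>c1\<bar>) \<le> fp / Dp * (x1 * (x1 + c1) + Y) + fm / Dm * (x1 * (x1 - c1) + Y)"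
    by (rule core[OF Y0 n0 Dm_eq Dm_le Dp_eq Dp_le fm0 fp0 mono1 mono2 z1 z2])
  have Vd: "(\<lambda>w::real^'n. V0 (norm w)) differentiable (at x)" using V_diff by simp
  have d0: "d \<le> 0" unfolding d_def
    by (rule deriv_nonpos[OF V0_deriv[OF Vd x_ne] _ V0_decr]) simp
  have gV: "grad V x = (d / n) *\<^sub>R x" unfolding V_def d_def n_def by (rule grad_V[OF Vd x_ne])
  have gp: "grad (Fc a \<sigma> (- c)) x = (fp / Dp) *\<^sub>R (x + c)"
    using grad_Fc[OF a_pos s0, of "- c" x] by (simp add: fp_def Dp_def)
  have gm: "grad (Fc a \<sigma> c) x = (fm / Dm) *\<^sub>R (x - c)"
    using grad_Fc[OF a_pos s0, of c x] by (simp add: fm_def Dm_def)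
  have lhs: "comm_fun a \<sigma> V (- c) x + comm_fun a \<sigma> V c x
      = (- 2 * d / n) * (fp / Dp * (x1 * (x1 + c1) + Y) + fm / Dm * (x1 * (x1 - c1) + Y))"
  proof -
    have i1: "grad (Fc a \<sigma> (- c)) x \<bullet> grad V x = (fp / Dp) * (d / n) * (x1 * (x1 + c1) + Y)"
      unfolding gp gV ipx[symmetric] by (simp add: inner_scaleR_left inner_scaleR_right mult.commute mult.left_commute)
    have i2: "grad (Fc a \<sigma> c) x \<bullet> grad V x = (fm / Dm) * (d / n) * (x1 * (x1 - c1) + Y)"
      unfolding gm gV imx[symmetric] by (simp add: inner_scaleR_left inner_scaleR_right mult.commute mult.left_commute)
    have gen: "\<And>A B e P Q::real. - 2 * (A * e * P) + - 2 * (B * e * Q) = (- 2 * e) * (A * P + B * Q)"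
      by (simp add: algebra_simps)
    have e: "- 2 * d / n = - 2 * (d / n)" by simp
    show ?thesis unfolding comm_fun_def i1 i2 e gen by (rule refl)
  qed
  have k0: "0 \<le> - 2 * d / n" using d0 n0 by (simp add: divide_nonpos_pos)
  have Mdef: "- 2 * d * min fp fm * (2 * Y / n) * (1 / (n + norm c))
      = (- 2 * d / n) * (min fp fm * (2 * Y) / (n + \<bar>c1\<bar>))" using nc by simp
  have ge: "comm_fun a \<sigma> V (- c) x + comm_fun a \<sigma> V c x \<ge> - 2 * d * min fp fm * (2 * Y / n) * (1 / (n + norm c))"
    unfolding lhs Mdef by (rule mult_left_mono[OF core_ineq k0])
  have nn: "- 2 * d * min fp fm * (2 * Y / n) * (1 / (n + norm c)) \<ge> 0"
    unfolding Mdef using fm0 fp0 Y0 n0 by (intro mult_nonneg_nonneg[OF k0] divide_nonneg_nonneg) auto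
  show ?thesis
    unfolding Let_def c_def[symmetric] V_def[symmetric]
    unfolding Y_def[symmetric] d_def[symmetric] fp_def[symmetric] fm_def[symmetric]
    unfolding n_def[symmetric]
    using ge nn by (intro conjI) assumption+
qed

end
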